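(* Let $m\ge 1$ and consider the labeled chip-firing process on $\mathbb{Z}$ starting with $2m$ chips labeled $-m,\dots,-1,1,\dots,m$ at site $0$. When the process terminates (i.e. a configuration is reached in which no firing move is possible), each chip $k$ is at position $k$, regardless of the choices of firing moves made.
   Context: Labeled chip-firing on the infinite path graph $\mathbb{Z}$ (each integer $i$ adjacent to $i-1$ and $i+1$): a firing move consists of choosing two chips with labels $a<b$ located at a common site $i$, and moving chip $a$ to site $i-1$ and chip $b$ to site $i+1$. The process terminates when all chips occupy distinct sites. *)

theory Defs
  imports Main
begin

definition chips :: "nat \<Rightarrow> int set" where
  "chips m = {k. - int m \<le> k \<and> k \<le> int m \<and> k \<noteq> 0}"

text \<open>A configuration assigns a site in Z to each chip label (values at
non-labels are irrelevant). A firing move: two chips a < b at a common site i;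
chip a moves to i-1 and chip b moves to i+1.\<close>
inductive fire :: "int set \<Rightarrow> (int \<Rightarrow> int) \<Rightarrow> (int \<Rightarrow> int) \<Rightarrow> bool" for L where
  "a \<in> L \<Longrightarrow> b \<in> L \<Longrightarrow> a < b \<Longrightarrow> c a = c b \<Longrightarrow>
     fire L c (c(a := c a - 1, b := c b + 1))"

definition terminal :: "int set \<Rightarrow> (int \<Rightarrow> int) \<Rightarrow> bool" where
  "terminal L c \<longleftrightarrow> inj_on c L"

end

theory Submission
  imports Defs "HOL-Library.Multiset"
begin


definition fire_at :: "int multiset \<Rightarrow> int \<Rightarrow> int multiset" where
  "fire_at M z = add_mset (z-1) (add_mset (z+1) (M - {#z, z#}))"

definition ufire :: "int multiset \<Rightarrow> int multiset \<Rightarrow> bool" where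
  "ufire M M' \<longleftrightarrow> (\<exists>z. 2 \<le> count M z \<and> M' = fire_at M z)"

definition stab :: "int multiset \<Rightarrow> bool" where
  "stab M \<longleftrightarrow> (\<forall>z. count M z \<le> 1)"

lemma count_fire_at:
  assumes "2 \<le> count M z"
  shows "count (fire_at M z) w = (if w = z then count M w - 2 else count M w)
           + (if w = z - 1 then 1 else 0) + (if w = z + 1 then 1 else 0)"
  using assms by (auto simp: fire_at_def)

lemma fire_commute:
  assumes "2 \<le> count M y" "2 \<le> count M z" "y \<noteq> z"
  shows "2 \<le> count (fire_at M y) z" "fire_at (fire_at M y) z = fire_at (fire_at M z) y"
proof -
  show c1: "2 \<le> count (fire_at M y) z" using assms by (simp add: count_fire_at)
  have c2: "2 \<le> count (fire_at M z) y" using assms by (simp add: count_fire_at)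
  show "fire_at (fire_at M y) z = fire_at (fire_at M z) y"
  proof (rule multiset_eqI)
    fix w
    show "count (fire_at (fire_at M y) z) w = count (fire_at (fire_at M z) y) w"
      using assms c1 c2 by (auto simp: count_fire_at)
  qed
qed

lemma stab_no_fire: "stab M \<Longrightarrow> \<not> ufire M M'"
proof
  assume "stab M" "ufire M M'"
  then obtain z where "2 \<le> count M z" "count M z \<le> 1" unfolding stab_def ufire_def by blast
  then show False by simp
qed

lemma exchange:
  "(ufire ^^ n) M B \<Longrightarrow> stab B \<Longrightarrow> ufire M M' \<Longrightarrow> \<exists>k. n = Suc k \<and> (ufire ^^ k) M' B"
proof (induction n arbitrary: M M')
  case 0
  then show ?case using stab_no_fire by auto
next
  case (Suc n)
  from Suc.prems(1) obtain M1 where s1: "ufire M M1" and r1: "(ufire ^^ n) M1 B"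
    by (meson relpowp_Suc_D2)
  from s1 obtain y where y: "2 \<le> count M y" "M1 = fire_at M y" unfolding ufire_def by blast
  from Suc.prems(3) obtain z where z: "2 \<le> count M z" "M' = fire_at M z" unfolding ufire_def by blast
  show ?case
  proof (cases "y = z")
    case True
    then show ?thesis using y z r1 by auto
  next
    case False
    define M'' where "M'' = fire_at M1 z"
    have u1: "ufire M1 M''" unfolding ufire_def M''_def using fire_commute[OF y(1) z(1) False] y by auto
    have e: "M'' = fire_at M' y" unfolding M''_def using fire_commute[OF y(1) z(1) False] y z by auto
    have u2: "ufire M' M''" unfolding ufire_def using e fire_commute[OF z(1) y(1)] False z by auto
    from Suc.IH[OF r1 Suc.prems(2) u1] obtain k where "n = Suc k" "(ufire ^^ k) M'' B" by blast
    then have "(ufire ^^ Suc k) M' B" using u2 by (meson relpowp_Suc_I2)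
    then show ?thesis using \<open>n = Suc k\<close> by blast
  qed
qed

lemma confl1: "ufire\<^sup>*\<^sup>* M B \<Longrightarrow> stab B \<Longrightarrow> ufire M M' \<Longrightarrow> ufire\<^sup>*\<^sup>* M' B"
  by (metis exchange rtranclp_power)

lemma confl: "ufire\<^sup>*\<^sup>* M M' \<Longrightarrow> ufire\<^sup>*\<^sup>* M B \<Longrightarrow> stab B \<Longrightarrow> ufire\<^sup>*\<^sup>* M' B"
  by (induction rule: rtranclp_induct) (auto intro: confl1)

lemma stab_rt: "ufire\<^sup>*\<^sup>* M B \<Longrightarrow> stab M \<Longrightarrow> B = M"
  by (induction rule: converse_rtranclp_induct) (auto dest: stab_no_fire)

lemma unique: "ufire\<^sup>*\<^sup>* M B1 \<Longrightarrow> stab B1 \<Longrightarrow> ufire\<^sup>*\<^sup>* M B2 \<Longrightarrow> stab B2 \<Longrightarrow> B1 = B2"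
  by (metis confl stab_rt)

lemma fire_at_plus: "2 \<le> count M z \<Longrightarrow> fire_at (M + K) z = fire_at M z + K"
  by (rule multiset_eqI) (simp add: count_fire_at)

lemma ufire_plus: "ufire M M' \<Longrightarrow> ufire (M + K) (M' + K)"
  unfolding ufire_def using fire_at_plus
  by (metis count_union le_add1 order_trans)

lemma rt_plus: "ufire\<^sup>*\<^sup>* M M' \<Longrightarrow> ufire\<^sup>*\<^sup>* (M + K) (M' + K)"
  by (induction rule: rtranclp_induct) (auto intro: ufire_plus rtranclp.rtrancl_into_rtrancl)

lemma rt_add: "ufire\<^sup>*\<^sup>* M M' \<Longrightarrow> ufire\<^sup>*\<^sup>* (add_mset y M) (add_mset y M')"
  using rt_plus[of M M' "{#y#}"] by simp



lemma fire_self: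
  assumes "stab E" "y \<in># E"
  shows "ufire (add_mset y E) (add_mset (y-1) (add_mset (y+1) (E - {#y#})))"
proof -
  have c: "count E y = 1" using assms unfolding stab_def by (metis count_eq_zero_iff le_antisym less_one not_le)
  have "fire_at (add_mset y E) y = add_mset (y-1) (add_mset (y+1) (E - {#y#}))"
    unfolding fire_at_def by (rule arg_cong2[where f=add_mset], simp, rule arg_cong2[where f=add_mset], simp)
      (rule multiset_eqI, simp)
  moreover have "2 \<le> count (add_mset y E) y" using c by simp
  ultimately show ?thesis unfolding ufire_def by metis
qed

lemma aval:
  assumes "stab E" "L < y" "y < R" "L \<notin># E" "R \<notin># E" "\<forall>t. L < t \<and> t < R \<longrightarrow> t \<in># E"
  shows "ufire\<^sup>*\<^sup>* (add_mset y E) (add_mset L (add_mset R (E - {#L + R - y#})))"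
  using assms
proof (induction "nat (R - L)" arbitrary: E L y R rule: less_induct)
  case less
  have cle: "\<And>w. count E w \<le> 1" using less.prems(1) unfolding stab_def by blast
  have cin: "\<And>t. L < t \<Longrightarrow> t < R \<Longrightarrow> count E t = 1"
    using less.prems(6) cle by (metis count_eq_zero_iff le_antisym less_one not_le)
  have cL: "count E L = 0" and cR: "count E R = 0" using less.prems(4,5) by (auto simp: count_eq_zero_iff)
  have yE: "y \<in># E" using less.prems(2,3,6) by blast
  have f1: "ufire (add_mset y E) (add_mset (y-1) (add_mset (y+1) (E - {#y#})))"
    using fire_self[OF less.prems(1) yE] .
  consider (i) "y - 1 = L" "y + 1 = R" | (ii) "y - 1 = L" "y + 1 < R" | (iii) "L < y - 1" "y + 1 = R"
    | (iv) "L < y - 1" "y + 1 < R" using less.prems(2,3) by linarith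
  then show ?case
  proof cases
    case i
    have "L + R - y = y" using i by simp
    then show ?thesis using f1 i by (metis r_into_rtranclp)
  next
    case ii
    define E2 where "E2 = add_mset L (E - {#y#})"
    have st2: "stab E2" unfolding stab_def E2_def using cle cL cin less.prems(2,3) by auto
    have h1: "y \<notin># E2" unfolding E2_def using cin[of y] less.prems(2,3) by (auto simp: count_eq_zero_iff[symmetric] in_diff_count)
    have h2: "R \<notin># E2" unfolding E2_def using cR less.prems(2,3) by (auto simp: count_eq_zero_iff[symmetric] in_diff_count)
    have h3: "\<forall>t. y < t \<and> t < R \<longrightarrow> t \<in># E2" unfolding E2_def using cin less.prems(2,3)
      by (auto simp: count_eq_zero_iff[symmetric] in_diff_count)
    have IH: "ufire\<^sup>*\<^sup>* (add_mset (y+1) E2) (add_mset y (add_mset R (E2 - {#y + R - (y+1)#})))"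
      using less.hyps[of R y E2 "y+1"] st2 h1 h2 h3 less.prems(2,3) ii by auto
    have eq1: "add_mset (y-1) (add_mset (y+1) (E - {#y#})) = add_mset (y+1) E2"
      unfolding E2_def using ii by simp
    have eq2: "add_mset y (add_mset R (E2 - {#y + R - (y+1)#})) = add_mset L (add_mset R (E - {#L + R - y#}))"
    proof (rule multiset_eqI)
      fix w
      show "count (add_mset y (add_mset R (E2 - {#y + R - (y + 1)#}))) w = count (add_mset L (add_mset R (E - {#L + R - y#}))) w"
        unfolding E2_def using ii cin[of y] cin[of "R - 1"] cL cR less.prems(2,3) by auto
    qed
    show ?thesis using f1 IH eq1 eq2 by (metis converse_rtranclp_into_rtranclp)
  next
    case iii
    define E2 where "E2 = add_mset R (E - {#y#})"
    have st2: "stab E2" unfolding stab_def E2_def using cle cR cin less.prems(2,3) by auto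
    have h1: "y \<notin># E2" unfolding E2_def using cin[of y] less.prems(2,3) by (auto simp: count_eq_zero_iff[symmetric] in_diff_count)
    have h2: "L \<notin># E2" unfolding E2_def using cL less.prems(2,3) by (auto simp: count_eq_zero_iff[symmetric] in_diff_count)
    have h3: "\<forall>t. L < t \<and> t < y \<longrightarrow> t \<in># E2" unfolding E2_def using cin less.prems(2,3)
      by (auto simp: count_eq_zero_iff[symmetric] in_diff_count)
    have IH: "ufire\<^sup>*\<^sup>* (add_mset (y-1) E2) (add_mset L (add_mset y (E2 - {#L + y - (y-1)#})))"
      using less.hyps[of y L E2 "y-1"] st2 h1 h2 h3 less.prems(2,3) iii by auto
    have eq1: "add_mset (y-1) (add_mset (y+1) (E - {#y#})) = add_mset (y-1) E2"
      unfolding E2_def using iii by simp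
    have eq2: "add_mset L (add_mset y (E2 - {#L + y - (y-1)#})) = add_mset L (add_mset R (E - {#L + R - y#}))"
    proof (rule multiset_eqI)
      fix w
      show "count (add_mset L (add_mset y (E2 - {#L + y - (y-1)#}))) w = count (add_mset L (add_mset R (E - {#L + R - y#}))) w"
        unfolding E2_def using iii cin[of y] cin[of "L + 1"] cL cR less.prems(2,3) by auto
    qed
    show ?thesis using f1 IH eq1 eq2 by (metis converse_rtranclp_into_rtranclp)
  next
    case iv
    define E0 where "E0 = E - {#y#}"
    have st0: "stab E0" unfolding stab_def E0_def using cle by (metis count_diff diff_le_self le_trans)
    have h1: "y \<notin># E0" unfolding E0_def using cin[of y] less.prems(2,3) by (auto simp: count_eq_zero_iff[symmetric] in_diff_count)
    have h2: "R \<notin># E0" unfolding E0_def using cR by (auto simp: count_eq_zero_iff[symmetric] in_diff_count)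
    have h3: "\<forall>t. y < t \<and> t < R \<longrightarrow> t \<in># E0" unfolding E0_def using cin less.prems(2,3)
      by (auto simp: count_eq_zero_iff[symmetric] in_diff_count)
    define B1 where "B1 = add_mset y (add_mset R (E0 - {#R - 1#}))"
    have IH1: "ufire\<^sup>*\<^sup>* (add_mset (y+1) E0) B1"
      using less.hyps[of R y E0 "y+1"] st0 h1 h2 h3 less.prems(2,3) iv unfolding B1_def by auto
    have r1: "ufire\<^sup>*\<^sup>* (add_mset (y-1) (add_mset (y+1) E0)) (add_mset (y-1) B1)"
      using rt_add[OF IH1] .
    have stB: "stab B1" unfolding stab_def B1_def E0_def using cle cR cin less.prems(2,3) iv by auto
    have g1: "L \<notin># B1" unfolding B1_def E0_def using cL less.prems(2,3) by (auto simp: count_eq_zero_iff[symmetric] in_diff_count)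
    have g2: "R - 1 \<notin># B1" unfolding B1_def E0_def using cin[of "R - 1"] iv less.prems(2,3)
      by (auto simp: count_eq_zero_iff[symmetric] in_diff_count)
    have g3: "\<forall>t. L < t \<and> t < R - 1 \<longrightarrow> t \<in># B1" unfolding B1_def E0_def using cin less.prems(2,3)
      by (auto simp: count_eq_zero_iff[symmetric] in_diff_count)
    have IH2: "ufire\<^sup>*\<^sup>* (add_mset (y-1) B1) (add_mset L (add_mset (R-1) (B1 - {#L + (R-1) - (y-1)#})))"
      using less.hyps[of "R-1" L B1 "y-1"] stB g1 g2 g3 less.prems(2,3) iv by auto
    have eq2: "add_mset L (add_mset (R-1) (B1 - {#L + (R-1) - (y-1)#})) = add_mset L (add_mset R (E - {#L + R - y#}))"
    proof (rule multiset_eqI)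
      fix w
      show "count (add_mset L (add_mset (R-1) (B1 - {#L + (R-1) - (y-1)#}))) w = count (add_mset L (add_mset R (E - {#L + R - y#}))) w"
        unfolding B1_def E0_def using iv cin[of y] cin[of "R - 1"] cin[of "L + R - y"] cL cR less.prems(2,3) by auto
    qed
    have eq1: "add_mset (y-1) (add_mset (y+1) (E - {#y#})) = add_mset (y-1) (add_mset (y+1) E0)"
      unfolding E0_def by simp
    show ?thesis using f1 r1 IH2 eq1 eq2
      by (metis (no_types, lifting) converse_rtranclp_into_rtranclp rtranclp_trans)
  qed
qed



lemma stab_aval_result:
  assumes "stab E" "L < y" "y < R" "L \<notin># E" "R \<notin># E" "\<forall>t. L < t \<and> t < R \<longrightarrow> t \<in># E"
  shows "stab (add_mset L (add_mset R (E - {#L + R - y#})))"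
proof -
  have cle: "\<And>w. count E w \<le> 1" using assms(1) unfolding stab_def by blast
  have "L < L + R - y" "L + R - y < R" using assms(2,3) by simp_all
  then have "L + R - y \<in># E" using assms(6) by blast
  then have "1 \<le> count E (L + R - y)" by (simp add: Suc_le_eq)
  then have cin: "count E (L + R - y) = 1" using cle[of "L + R - y"] by (rule le_antisym[rotated])
  have cL: "count E L = 0" and cR: "count E R = 0" using assms(4,5) by (auto simp: count_eq_zero_iff)
  show ?thesis unfolding stab_def using cle cin cL cR assms(2,3) by auto
qed

lemma holeL_aux:
  "t0 < (y::int) \<Longrightarrow> t0 \<notin># E \<Longrightarrow> \<exists>L<y. L \<notin># E \<and> (\<forall>t. L < t \<and> t < y \<longrightarrow> t \<in># E)"
proof (induction "nat (y - t0)" arbitrary: y rule: less_induct)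
  case less
  show ?case
  proof (cases "y - 1 \<in># E")
    case False
    then show ?thesis by (intro exI[of _ "y - 1"]) auto
  next
    case True
    then have "t0 \<noteq> y - 1" using less.prems by auto
    then have "t0 < y - 1" using less.prems by simp
    then obtain L where L: "L < y - 1" "L \<notin># E" "\<forall>t. L < t \<and> t < y - 1 \<longrightarrow> t \<in># E"
      using less.hyps[of "y - 1"] less.prems by auto
    have "\<forall>t. L < t \<and> t < y \<longrightarrow> t \<in># E"
    proof (intro allI impI)
      fix t assume t: "L < t \<and> t < y"
      show "t \<in># E"
      proof (cases "t = y - 1")
        case True then show ?thesis using \<open>y - 1 \<in># E\<close> by simp
      next
        case False then show ?thesis using L t by simp
      qed
    qed
    then show ?thesis using L by (intro exI[of _ L]) simp
  qed
qed

lemma holeR_aux: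
  "(y::int) < t0 \<Longrightarrow> t0 \<notin># E \<Longrightarrow> \<exists>R>y. R \<notin># E \<and> (\<forall>t. y < t \<and> t < R \<longrightarrow> t \<in># E)"
proof (induction "nat (t0 - y)" arbitrary: y rule: less_induct)
  case less
  show ?case
  proof (cases "y + 1 \<in># E")
    case False
    then show ?thesis by (intro exI[of _ "y + 1"]) auto
  next
    case True
    then have "t0 \<noteq> y + 1" using less.prems by auto
    then have "y + 1 < t0" using less.prems by simp
    then obtain R where R: "y + 1 < R" "R \<notin># E" "\<forall>t. y + 1 < t \<and> t < R \<longrightarrow> t \<in># E"
      using less.hyps[of "y + 1"] less.prems by auto
    have "\<forall>t. y < t \<and> t < R \<longrightarrow> t \<in># E"
    proof (intro allI impI)
      fix t assume t: "y < t \<and> t < R"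
      show "t \<in># E"
      proof (cases "t = y + 1")
        case True then show ?thesis using \<open>y + 1 \<in># E\<close> by simp
      next
        case False then show ?thesis using R t by simp
      qed
    qed
    then show ?thesis using R by (intro exI[of _ R]) simp
  qed
qed

lemma ex_below: "\<exists>t<y. t \<notin># (E::int multiset)"
proof -
  define t where "t = min (y - 1) (Min (insert y (set_mset E)) - 1)"
  have "t < y" unfolding t_def by simp
  moreover have "t \<notin># E"
  proof
    assume a: "t \<in># E"
    have h1: "t \<le> Min (insert y (set_mset E)) - 1" unfolding t_def by (rule min.cobounded2)
    have h2: "Min (insert y (set_mset E)) \<le> t" using a by (intro Min_le) auto
    show False using h1 h2 by linarith
  qed
  ultimately show ?thesis by blast
qed

lemma ex_above: "\<exists>t>y. t \<notin># (E::int multiset)"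
proof -
  define t where "t = max (y + 1) (Max (insert y (set_mset E)) + 1)"
  have "y < t" unfolding t_def by simp
  moreover have "t \<notin># E"
  proof
    assume a: "t \<in># E"
    have h1: "Max (insert y (set_mset E)) + 1 \<le> t" unfolding t_def by (rule max.cobounded2)
    have h2: "t \<le> Max (insert y (set_mset E))" using a by (intro Max_ge) auto
    show False using h1 h2 by linarith
  qed
  ultimately show ?thesis by blast
qed

lemma holeL: "\<exists>L<(y::int). L \<notin># E \<and> (\<forall>t. L < t \<and> t < y \<longrightarrow> t \<in># E)"
  using ex_below holeL_aux by blast

lemma holeR: "\<exists>R>(y::int). R \<notin># E \<and> (\<forall>t. y < t \<and> t < R \<longrightarrow> t \<in># E)"
  using ex_above holeR_aux by blast

lemma holes:
  assumes "(y::int) \<in># E"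
  obtains L R where "L < y" "y < R" "L \<notin># E" "R \<notin># E" "\<forall>t. L < t \<and> t < R \<longrightarrow> t \<in># E"
proof -
  obtain L where L: "L < y" "L \<notin># E" "\<forall>t. L < t \<and> t < y \<longrightarrow> t \<in># E" using holeL by blast
  obtain R where R: "y < R" "R \<notin># E" "\<forall>t. y < t \<and> t < R \<longrightarrow> t \<in># E" using holeR by blast
  have "\<forall>t. L < t \<and> t < R \<longrightarrow> t \<in># E"
  proof (intro allI impI)
    fix t assume "L < t \<and> t < R"
    then show "t \<in># E" using L R assms by (cases "t < y"; cases "t = y"; auto)
  qed
  then show ?thesis using that L R by blast
qed

lemma stab_add_notin: "stab E \<Longrightarrow> y \<notin># E \<Longrightarrow> stab (add_mset y E)"
  unfolding stab_def by (simp add: count_eq_zero_iff[symmetric])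

lemma exists_stab: "\<exists>B. ufire\<^sup>*\<^sup>* M B \<and> stab B"
proof (induction M)
  case empty
  then show ?case by (intro exI[of _ "{#}"]) (auto simp: stab_def)
next
  case (add y M)
  then obtain E where E: "ufire\<^sup>*\<^sup>* M E" "stab E" by blast
  have r: "ufire\<^sup>*\<^sup>* (add_mset y M) (add_mset y E)" using rt_add[OF E(1)] .
  show ?case
  proof (cases "y \<in># E")
    case False
    then show ?thesis using r E(2) stab_add_notin by blast
  next
    case True
    then obtain L R where LR: "L < y" "y < R" "L \<notin># E" "R \<notin># E" "\<forall>t. L < t \<and> t < R \<longrightarrow> t \<in># E"
      by (rule holes)
    show ?thesis using aval[OF E(2) LR] stab_aval_result[OF E(2) LR] r by (meson rtranclp_trans)
  qed
qed

definition G :: "int multiset \<Rightarrow> int multiset" where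
  "G M = (THE B. ufire\<^sup>*\<^sup>* M B \<and> stab B)"

lemma G_spec: "ufire\<^sup>*\<^sup>* M (G M) \<and> stab (G M)"
proof -
  have "\<exists>!B. ufire\<^sup>*\<^sup>* M B \<and> stab B" using exists_stab unique by blast
  then show ?thesis unfolding G_def by (rule theI')
qed

lemma G_eq: "ufire\<^sup>*\<^sup>* M B \<Longrightarrow> stab B \<Longrightarrow> G M = B"
  using G_spec[of M] unique[of M "G M" B] by simp

lemma G_stab: "stab (G M)" using G_spec by blast

lemma G_of_stab: "stab M \<Longrightarrow> G M = M" using G_eq[of M M] by simp

lemma G_step: "ufire\<^sup>*\<^sup>* M M' \<Longrightarrow> G M' = G M"
proof -
  assume a: "ufire\<^sup>*\<^sup>* M M'"
  have "ufire\<^sup>*\<^sup>* M' (G M)" using confl[OF a] G_spec[of M] by simp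
  then show ?thesis using G_eq G_stab by simp
qed

lemma G_add: "G (add_mset y M) = G (add_mset y (G M))"
  using G_step[OF rt_add[OF conjunct1[OF G_spec[of M]]]] by simp

lemma G_aval:
  assumes "stab E" "L < y" "y < R" "L \<notin># E" "R \<notin># E" "\<forall>t. L < t \<and> t < R \<longrightarrow> t \<in># E"
  shows "G (add_mset y E) = add_mset L (add_mset R (E - {#L + R - y#}))"
  using G_eq[OF aval[OF assms] stab_aval_result[OF assms]] .



lemma cnt1: "stab E \<Longrightarrow> x \<in># E \<Longrightarrow> count E x = 1"
proof -
  assume a: "stab E" "x \<in># E"
  then have "count E x \<le> 1" unfolding stab_def by blast
  moreover have "1 \<le> count E x" using a(2) by (simp add: Suc_le_eq)
  ultimately show ?thesis by (rule le_antisym)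
qed

lemma key_right:
  "\<exists>q. q - 1 \<in># G (add_mset z M) \<and> q \<notin># G (add_mset z M) \<and>
       G (add_mset (z+1) M) = add_mset q (G (add_mset z M) - {#q-1#})"
proof -
  define E where "E = G M"
  have stE: "stab E" unfolding E_def by (rule G_stab)
  have H: "G (add_mset z M) = G (add_mset z E)" unfolding E_def by (rule G_add)
  have X: "G (add_mset (z+1) M) = G (add_mset (z+1) E)" unfolding E_def by (rule G_add)
  have cle: "\<And>w. count E w \<le> 1" using stE unfolding stab_def by blast
  show ?thesis
  proof (cases "z \<in># E")
    case False
    have Hs: "G (add_mset z E) = add_mset z E" using G_of_stab stab_add_notin[OF stE False] by blast
    show ?thesis
    proof (cases "z + 1 \<in># E")
      case False
      have Xs: "G (add_mset (z+1) E) = add_mset (z+1) E"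
        using G_of_stab stab_add_notin[OF stE False] by blast
      show ?thesis
        by (rule exI[of _ "z+1"]) (use False \<open>z \<notin># E\<close> in \<open>simp add: H X Hs Xs\<close>)
    next
      case True
      obtain R where R: "z+1 < R" "R \<notin># E" "\<forall>t. z+1 < t \<and> t < R \<longrightarrow> t \<in># E"
        using holeR by blast
      have LR: "\<forall>t. z < t \<and> t < R \<longrightarrow> t \<in># E"
      proof (intro allI impI)
        fix t assume t: "z < t \<and> t < R"
        show "t \<in># E" proof (cases "t = z + 1")
          case True then show ?thesis using \<open>z + 1 \<in># E\<close> by simp
        next
          case False then show ?thesis using t R by simp
        qed
      qed
      have Xs: "G (add_mset (z+1) E) = add_mset z (add_mset R (E - {#z + R - (z+1)#}))"
        using G_aval[OF stE, of z "z+1" R] \<open>z \<notin># E\<close> R LR by simp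
      have R1: "R - 1 \<in># E" using LR R(1) by simp
      have cR1: "count E (R - 1) = 1" using cnt1[OF stE R1] .
      have cR: "count E R = 0" using R(2) by (simp add: count_eq_zero_iff)
      have cz: "count E z = 0" using \<open>z \<notin># E\<close> by (simp add: count_eq_zero_iff)
      show ?thesis
      proof (rule exI[of _ R], intro conjI)
        show "R - 1 \<in># G (add_mset z M)" using H Hs R1 by simp
        show "R \<notin># G (add_mset z M)" using H Hs R(1,2) by simp
        show "G (add_mset (z + 1) M) = add_mset R (G (add_mset z M) - {#R - 1#})"
          unfolding X Xs H Hs
        proof (rule multiset_eqI)
          fix w
          show "count (add_mset z (add_mset R (E - {#z + R - (z + 1)#}))) w =
                count (add_mset R (add_mset z E - {#R - 1#})) w"
            using cR1 cR cz R(1) by auto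
        qed
      qed
    qed
  next
    case True
    obtain L R where LR: "L < z" "z < R" "L \<notin># E" "R \<notin># E" "\<forall>t. L < t \<and> t < R \<longrightarrow> t \<in># E"
      using holes[OF True] by blast
    have cin: "\<And>t. L < t \<Longrightarrow> t < R \<Longrightarrow> count E t = 1" using LR(5) cnt1[OF stE] by blast
    have cL: "count E L = 0" and cR: "count E R = 0" using LR(3,4) by (auto simp: count_eq_zero_iff)
    have Hs: "G (add_mset z E) = add_mset L (add_mset R (E - {#L + R - z#}))"
      using G_aval[OF stE LR] .
    show ?thesis
    proof (cases "R = z + 1")
      case True
      have Xs: "G (add_mset (z+1) E) = add_mset (z+1) E"
        using G_of_stab stab_add_notin[OF stE] LR(4) True by blast
      show ?thesis
      proof (rule exI[of _ "L + 1"], intro conjI)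
        show "L + 1 - 1 \<in># G (add_mset z M)" using H Hs by simp
        show "L + 1 \<notin># G (add_mset z M)" unfolding H Hs
          using cin[of "L+1"] True LR(1,2) by (simp add: in_diff_count)
        show "G (add_mset (z + 1) M) = add_mset (L + 1) (G (add_mset z M) - {#L + 1 - 1#})"
          unfolding X Xs H Hs
        proof (rule multiset_eqI)
          fix w
          show "count (add_mset (z + 1) E) w = count (add_mset (L + 1) (add_mset L (add_mset R (E - {#L + R - z#})) - {#L + 1 - 1#})) w"
            using True cin[of "L+1"] cL cR LR(1,2) by auto
        qed
      qed
    next
      case False
      then have zR: "z + 1 < R" using LR(2) by simp
      have Xs: "G (add_mset (z+1) E) = add_mset L (add_mset R (E - {#L + R - (z+1)#}))"
        using G_aval[OF stE, of L "z+1" R] LR zR by simp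
      define q where "q = L + R - z"
      have q1: "L < q - 1" "q < R" unfolding q_def using LR(1,2) zR by simp_all
      show ?thesis
      proof (rule exI[of _ q], intro conjI)
        show "q - 1 \<in># G (add_mset z M)" unfolding H Hs
          using cin[of "q - 1"] q1 by (simp add: in_diff_count q_def)
        show "q \<notin># G (add_mset z M)" unfolding H Hs
          using cin[of q] q1 by (simp add: in_diff_count q_def)
        show "G (add_mset (z + 1) M) = add_mset q (G (add_mset z M) - {#q - 1#})"
          unfolding X Xs H Hs
        proof (rule multiset_eqI)
          fix w
          show "count (add_mset L (add_mset R (E - {#L + R - (z + 1)#}))) w =
                count (add_mset q (add_mset L (add_mset R (E - {#L + R - z#})) - {#q - 1#})) w"
            using cin[of q] cin[of "q-1"] q1 cL cR unfolding q_def by auto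
        qed
      qed
    qed
  qed
qed

lemma key_left:
  "\<exists>q. q + 1 \<in># G (add_mset z M) \<and> q \<notin># G (add_mset z M) \<and>
       G (add_mset (z-1) M) = add_mset q (G (add_mset z M) - {#q+1#})"
proof -
  obtain q where q: "q - 1 \<in># G (add_mset (z-1) M)" "q \<notin># G (add_mset (z-1) M)"
     "G (add_mset (z - 1 + 1) M) = add_mset q (G (add_mset (z-1) M) - {#q-1#})"
    using key_right[of "z-1" M] by blast
  define H' where "H' = G (add_mset (z-1) M)"
  have st: "stab H'" unfolding H'_def by (rule G_stab)
  have c1: "count H' (q-1) = 1" using cnt1[OF st] q(1) unfolding H'_def by blast
  have c0: "count H' q = 0" using q(2) unfolding H'_def by (simp add: count_eq_zero_iff)
  have HH: "G (add_mset z M) = add_mset q (H' - {#q-1#})" using q(3) unfolding H'_def by simp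
  show ?thesis
  proof (rule exI[of _ "q - 1"], intro conjI)
    show "q - 1 + 1 \<in># G (add_mset z M)" unfolding HH by simp
    show "q - 1 \<notin># G (add_mset z M)" unfolding HH using c1 by (simp add: in_diff_count)
    show "G (add_mset (z - 1) M) = add_mset (q - 1) (G (add_mset z M) - {#q - 1 + 1#})"
      unfolding HH H'_def[symmetric]
    proof (rule multiset_eqI)
      fix w
      show "count H' w = count (add_mset (q - 1) (add_mset q (H' - {#q - 1#}) - {#q - 1 + 1#})) w"
        using c1 c0 by auto
    qed
  qed
qed


lemma set_move:
  assumes "stab H" "x \<in># H" "q \<notin># H"
  shows "set_mset (add_mset q (H - {#x#})) = insert q (set_mset H - {x})"
proof -
  have "set_mset (H - {#x#}) = set_mset H - {x}"
  proof (rule set_eqI)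
    fix w
    show "w \<in># H - {#x#} \<longleftrightarrow> w \<in> set_mset H - {x}"
      using cnt1[OF assms(1,2)] by (cases "w = x") (auto simp: in_diff_count)
  qed
  then show ?thesis by simp
qed

lemma card_swap:
  assumes "finite A" "x \<in> A" "q \<notin> A"
  shows "card (insert q (A - {x})) = card A"
proof -
  have "card (insert q (A - {x})) = Suc (card (A - {x}))" using assms by (intro card_insert_disjoint) auto
  also have "\<dots> = card A" using card_Suc_Diff1[OF assms(1,2)] .
  finally show ?thesis .
qed

lemma card_ins_ge:
  assumes "finite (S::int set)" "q - 1 \<in> S" "q \<notin> S"
  shows "card {y \<in> insert q (S - {q - 1}). a \<le> y} = card {y \<in> S. a \<le> y} + (if q = a then 1 else 0)"
proof (cases "a \<le> q - 1")
  case True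
  have "{y \<in> insert q (S - {q - 1}). a \<le> y} = insert q ({y \<in> S. a \<le> y} - {q - 1})" using True by auto
  moreover have "card (insert q ({y \<in> S. a \<le> y} - {q - 1})) = card {y \<in> S. a \<le> y}"
    using assms True by (intro card_swap) auto
  ultimately show ?thesis using True by simp
next
  case False
  show ?thesis
  proof (cases "q = a")
    case True
    have "{y \<in> insert q (S - {q - 1}). a \<le> y} = insert q {y \<in> S. a \<le> y}" using True False by auto
    then show ?thesis using assms True by (simp add: card_insert_if)
  next
    case F2: False
    have "{y \<in> insert q (S - {q - 1}). a \<le> y} = {y \<in> S. a \<le> y}" using F2 False assms(2) by auto
    then show ?thesis using F2 by simp
  qed
qed

lemma card_ins_le:
  assumes "finite (S::int set)" "q + 1 \<in> S" "q \<notin> S"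
  shows "card {y \<in> insert q (S - {q + 1}). y \<le> a} = card {y \<in> S. y \<le> a} + (if q = a then 1 else 0)"
proof (cases "q + 1 \<le> a")
  case True
  have "{y \<in> insert q (S - {q + 1}). y \<le> a} = insert q ({y \<in> S. y \<le> a} - {q + 1})" using True by auto
  moreover have "card (insert q ({y \<in> S. y \<le> a} - {q + 1})) = card {y \<in> S. y \<le> a}"
    using assms True by (intro card_swap) auto
  ultimately show ?thesis using True by simp
next
  case False
  show ?thesis
  proof (cases "q = a")
    case True
    have "{y \<in> insert q (S - {q + 1}). y \<le> a} = insert q {y \<in> S. y \<le> a}" using True False by auto
    then show ?thesis using assms True by (simp add: card_insert_if)
  next
    case F2: False
    have "{y \<in> insert q (S - {q + 1}). y \<le> a} = {y \<in> S. y \<le> a}" using F2 False assms(2) by auto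
    then show ?thesis using F2 by simp
  qed
qed

lemma card_ins_le2:
  assumes "finite (S::int set)" "q - 1 \<in> S" "q \<notin> S"
  shows "card {y \<in> insert q (S - {q - 1}). y \<le> a} \<le> card {y \<in> S. y \<le> a}"
proof (cases "q \<le> a")
  case True
  have "{y \<in> insert q (S - {q - 1}). y \<le> a} = insert q ({y \<in> S. y \<le> a} - {q - 1})" using True by auto
  moreover have "card (insert q ({y \<in> S. y \<le> a} - {q - 1})) = card {y \<in> S. y \<le> a}"
    using assms True by (intro card_swap) auto
  ultimately show ?thesis by simp
next
  case False
  have "{y \<in> insert q (S - {q - 1}). y \<le> a} \<subseteq> {y \<in> S. y \<le> a}" using False by auto
  then show ?thesis using assms(1) by (intro card_mono) auto
qed

lemma card_ins_ge2:
  assumes "finite (S::int set)" "q + 1 \<in> S" "q \<notin> S"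
  shows "card {y \<in> insert q (S - {q + 1}). a \<le> y} \<le> card {y \<in> S. a \<le> y}"
proof (cases "a \<le> q")
  case True
  have "{y \<in> insert q (S - {q + 1}). a \<le> y} = insert q ({y \<in> S. a \<le> y} - {q + 1})" using True by auto
  moreover have "card (insert q ({y \<in> S. a \<le> y} - {q + 1})) = card {y \<in> S. a \<le> y}"
    using assms True by (intro card_swap) auto
  ultimately show ?thesis by simp
next
  case False
  have "{y \<in> insert q (S - {q + 1}). a \<le> y} \<subseteq> {y \<in> S. a \<le> y}" using False by auto
  then show ?thesis using assms(1) by (intro card_mono) auto
qed

lemma card_interval_ge:
  assumes "finite S" "a < b"
  shows "int (card {y \<in> S. a \<le> y}) \<le> int (card {y \<in> (S::int set). b \<le> y}) + (b - a) - (if a \<in> S then 0 else 1)"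
proof -
  have sub: "{y \<in> S. a \<le> y} \<subseteq> {y \<in> S. b \<le> y} \<union> ({y \<in> S. a \<le> y \<and> y < b})" by auto
  have "card {y \<in> S. a \<le> y} \<le> card {y \<in> S. b \<le> y} + card {y \<in> S. a \<le> y \<and> y < b}"
  proof -
    have "card {y \<in> S. a \<le> y} \<le> card ({y \<in> S. b \<le> y} \<union> {y \<in> S. a \<le> y \<and> y < b})"
      using sub assms(1) by (intro card_mono) auto
    then show ?thesis using card_Un_le[of "{y \<in> S. b \<le> y}" "{y \<in> S. a \<le> y \<and> y < b}"] by linarith
  qed
  moreover have "int (card {y \<in> S. a \<le> y \<and> y < b}) \<le> (b - a) - (if a \<in> S then 0 else 1)"
  proof (cases "a \<in> S")
    case True
    have "{y \<in> S. a \<le> y \<and> y < b} \<subseteq> {a..<b}" by auto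
    then have "card {y \<in> S. a \<le> y \<and> y < b} \<le> card {a..<b}" by (intro card_mono) auto
    then show ?thesis using True assms(2) by simp
  next
    case False
    have "{y \<in> S. a \<le> y \<and> y < b} \<subseteq> {a<..<b}" using False by (auto simp: order_le_less)
    then have "card {y \<in> S. a \<le> y \<and> y < b} \<le> card {a<..<b}" by (intro card_mono) auto
    then show ?thesis using False assms(2) by simp
  qed
  ultimately show ?thesis by linarith
qed

lemma card_interval_le:
  assumes "finite S" "a < b"
  shows "int (card {y \<in> S. y \<le> b}) \<le> int (card {y \<in> (S::int set). y \<le> a}) + (b - a) - (if b \<in> S then 0 else 1)"
proof -
  have sub: "{y \<in> S. y \<le> b} \<subseteq> {y \<in> S. y \<le> a} \<union> ({y \<in> S. a < y \<and> y \<le> b})" by auto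
  have "card {y \<in> S. y \<le> b} \<le> card {y \<in> S. y \<le> a} + card {y \<in> S. a < y \<and> y \<le> b}"
  proof -
    have "card {y \<in> S. y \<le> b} \<le> card ({y \<in> S. y \<le> a} \<union> {y \<in> S. a < y \<and> y \<le> b})"
      using sub assms(1) by (intro card_mono) auto
    then show ?thesis using card_Un_le[of "{y \<in> S. y \<le> a}" "{y \<in> S. a < y \<and> y \<le> b}"] by linarith
  qed
  moreover have "int (card {y \<in> S. a < y \<and> y \<le> b}) \<le> (b - a) - (if b \<in> S then 0 else 1)"
  proof (cases "b \<in> S")
    case True
    have "{y \<in> S. a < y \<and> y \<le> b} \<subseteq> {a<..b}" by auto
    then have "card {y \<in> S. a < y \<and> y \<le> b} \<le> card {a<..b}" by (intro card_mono) auto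
    then show ?thesis using True assms(2) by simp
  next
    case False
    have "{y \<in> S. a < y \<and> y \<le> b} \<subseteq> {a<..<b}" using False by (auto simp: order_le_less)
    then have "card {y \<in> S. a < y \<and> y \<le> b} \<le> card {a<..<b}" by (intro card_mono) auto
    then show ?thesis using False assms(2) by simp
  qed
  ultimately show ?thesis by linarith
qed



definition cfg :: "int set \<Rightarrow> (int \<Rightarrow> int) \<Rightarrow> int multiset" where
  "cfg A c = image_mset c (mset_set A)"

lemma cfg_remove: "finite A \<Longrightarrow> k \<in> A \<Longrightarrow> cfg A c = add_mset (c k) (cfg (A - {k}) c)"
  unfolding cfg_def by (simp add: mset_set.remove)

lemma cfg_cong: "(\<And>x. x \<in> A \<Longrightarrow> c x = c' x) \<Longrightarrow> cfg A c = cfg A c'"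
  unfolding cfg_def by (cases "finite A") (auto intro: image_mset_cong)

lemma fire_two: "fire_at (add_mset z (add_mset z N)) z = add_mset (z-1) (add_mset (z+1) N)"
  unfolding fire_at_def by simp

lemma cfg_fire:
  assumes "finite A" "a \<in> A" "b \<in> A" "a \<noteq> b" "c a = z" "c b = z"
  shows "cfg A (c(a := z - 1, b := z + 1)) = fire_at (cfg A c) z \<and> 2 \<le> count (cfg A c) z"
proof -
  define N where "N = cfg (A - {a} - {b}) c"
  have fA: "finite (A - {a})" using assms(1) by simp
  have bA: "b \<in> A - {a}" using assms by simp
  have e1: "cfg A c = add_mset z (add_mset z N)"
    using cfg_remove[OF assms(1,2), of c] cfg_remove[OF fA bA, of c] assms(5,6) unfolding N_def by simp
  have e2: "cfg A (c(a := z - 1, b := z + 1)) = add_mset (z-1) (add_mset (z+1) (cfg (A - {a} - {b}) (c(a := z - 1, b := z + 1))))"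
    using cfg_remove[OF assms(1,2), of "c(a := z - 1, b := z + 1)"] cfg_remove[OF fA bA, of "c(a := z - 1, b := z + 1)"] assms(4)
    by simp
  have e3: "cfg (A - {a} - {b}) (c(a := z - 1, b := z + 1)) = N"
    unfolding N_def by (rule cfg_cong[symmetric]) auto
  show ?thesis using e1 e2 e3 fire_two by simp
qed

lemma cfg_pair:
  assumes "finite A" "a \<in> A" "b \<in> A" "a \<noteq> b" "c a = z" "c b = z"
  shows "cfg (A - {a}) c = add_mset z (cfg (A - {a} - {b}) c)"
    "cfg (A - {b}) c = add_mset z (cfg (A - {a} - {b}) c)"
    "cfg (A - {a}) (c(a := z - 1, b := z + 1)) = add_mset (z+1) (cfg (A - {a} - {b}) c)"
    "cfg (A - {b}) (c(a := z - 1, b := z + 1)) = add_mset (z-1) (cfg (A - {a} - {b}) c)"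
proof -
  have fA: "finite (A - {a})" "finite (A - {b})" using assms(1) by simp_all
  have bA: "b \<in> A - {a}" "a \<in> A - {b}" using assms by simp_all
  have sw: "A - {b} - {a} = A - {a} - {b}" by blast
  have cc: "cfg (A - {a} - {b}) (c(a := z - 1, b := z + 1)) = cfg (A - {a} - {b}) c"
    by (rule cfg_cong) auto
  show "cfg (A - {a}) c = add_mset z (cfg (A - {a} - {b}) c)"
    using cfg_remove[OF fA(1) bA(1), of c] assms(6) by simp
  show "cfg (A - {b}) c = add_mset z (cfg (A - {a} - {b}) c)"
    using cfg_remove[OF fA(2) bA(2), of c] assms(5) sw by simp
  show "cfg (A - {a}) (c(a := z - 1, b := z + 1)) = add_mset (z+1) (cfg (A - {a} - {b}) c)"
    using cfg_remove[OF fA(1) bA(1), of "c(a := z - 1, b := z + 1)"] cc by simp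
  show "cfg (A - {b}) (c(a := z - 1, b := z + 1)) = add_mset (z-1) (cfg (A - {a} - {b}) c)"
    using cfg_remove[OF fA(2) bA(2), of "c(a := z - 1, b := z + 1)"] cc sw assms(4) by simp
qed



lemma cms: "finite A \<Longrightarrow> count (mset_set A) x = (if x \<in> A then 1 else 0)"
  by (simp add: count_mset_set(1) count_mset_set(2))

lemma stab_mset_set: "stab (mset_set A)"
  unfolding stab_def
proof
  fix z show "count (mset_set A) z \<le> 1"
    by (cases "finite A") (simp_all add: cms)
qed

lemma G_rep: "G (replicate_mset (2*n) 0) = mset_set ({-int n..int n} - {0}) \<and>
              G (replicate_mset (2*n+1) 0) = mset_set {-int n..int n}"
proof (induction n)
  case 0
  have a: "G {#} = {#}" by (rule G_of_stab) (simp add: stab_def)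
  have b: "G {#0#} = {#0#}" by (rule G_of_stab) (simp add: stab_def)
  show ?case using a b by simp
next
  case (Suc n)
  define E where "E = mset_set {-int n..int n}"
  have stE: "stab E" unfolding E_def by (rule stab_mset_set)
  have g1: "G (replicate_mset (2 * Suc n) 0) = G (add_mset 0 E)"
  proof -
    have "replicate_mset (2 * Suc n) 0 = add_mset (0::int) (replicate_mset (2*n+1) 0)" by simp
    then show ?thesis using G_add[of 0 "replicate_mset (2*n+1) 0"] Suc.IH unfolding E_def by simp
  qed
  have h1: "- int n - 1 \<notin># E" "int n + 1 \<notin># E" "\<forall>t. - int n - 1 < t \<and> t < int n + 1 \<longrightarrow> t \<in># E"
    unfolding E_def by auto
  have g2: "G (add_mset 0 E) = add_mset (- int n - 1) (add_mset (int n + 1) (E - {#- int n - 1 + (int n + 1) - 0#}))"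
    by (rule G_aval[OF stE]) (use h1 in auto)
  have e2: "add_mset (- int n - 1) (add_mset (int n + 1) (E - {#- int n - 1 + (int n + 1) - 0#}))
        = mset_set ({-int (Suc n)..int (Suc n)} - {0})"
  proof (rule multiset_eqI)
    fix w
    show "count (add_mset (- int n - 1) (add_mset (int n + 1) (E - {#- int n - 1 + (int n + 1) - 0#}))) w
          = count (mset_set ({-int (Suc n)..int (Suc n)} - {0})) w"
      unfolding E_def by (auto simp: cms)
  qed
  have A: "G (replicate_mset (2 * Suc n) 0) = mset_set ({-int (Suc n)..int (Suc n)} - {0})"
    using g1 g2 e2 by simp
  have B1: "replicate_mset (2 * Suc n + 1) 0 = add_mset (0::int) (replicate_mset (2 * Suc n) 0)" by simp
  have B2: "G (replicate_mset (2 * Suc n + 1) 0) = G (add_mset 0 (mset_set ({-int (Suc n)..int (Suc n)} - {0})))"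
    using G_add[of 0 "replicate_mset (2 * Suc n) 0"] A B1 by simp
  have B3: "add_mset 0 (mset_set ({-int (Suc n)..int (Suc n)} - {0})) = mset_set {-int (Suc n)..int (Suc n)}"
    by (rule multiset_eqI) (auto simp: cms)
  have B: "G (replicate_mset (2 * Suc n + 1) 0) = mset_set {-int (Suc n)..int (Suc n)}"
    using B2 B3 G_of_stab[OF stab_mset_set[of "{-int (Suc n)..int (Suc n)}"]] by simp
  show ?case using A B by (rule conjI)
qed

lemma finite_chips: "finite (chips m)"
  unfolding chips_def by (rule finite_subset[of _ "{-int m..int m}"]) auto

lemma chips_eq: "chips m = {-int m..int m} - {0}"
  unfolding chips_def by auto

lemma card_chips: "card (chips m) = 2 * m"
proof -
  have "card ({-int m..int m} - {0}) = card {-int m..int m} - 1" by (simp add: card_Diff_singleton)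
  then show ?thesis unfolding chips_eq by simp
qed

definition invk :: "nat \<Rightarrow> (int \<Rightarrow> int) \<Rightarrow> int \<Rightarrow> bool" where
  "invk m c k \<longleftrightarrow>
    (0 < k \<longrightarrow> int (card {y \<in> set_mset (G (cfg (chips m - {k}) c)). k \<le> y}) \<le> int m - k) \<and>
    (k < 0 \<longrightarrow> int (card {y \<in> set_mset (G (cfg (chips m - {k}) c)). y \<le> k}) \<le> int m + k)"

definition Inv :: "nat \<Rightarrow> (int \<Rightarrow> int) \<Rightarrow> bool" where
  "Inv m c \<longleftrightarrow> (\<forall>k \<in> chips m. invk m c k)"

lemma Inv_init:
  assumes "m \<ge> 1"
  shows "Inv m (\<lambda>_. 0)"
  unfolding Inv_def
proof
  fix k assume k: "k \<in> chips m"
  have "card (chips m - {k}) = 2 * (m - 1) + 1" using card_chips[of m] k finite_chips assms by simp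
  then have "cfg (chips m - {k}) (\<lambda>_. 0) = replicate_mset (2 * (m - 1) + 1) 0"
    unfolding cfg_def by (simp add: image_mset_const_eq)
  then have "G (cfg (chips m - {k}) (\<lambda>_. 0)) = mset_set {-int (m-1)..int (m-1)}" using G_rep by simp
  then have S: "set_mset (G (cfg (chips m - {k}) (\<lambda>_. 0))) = {-(int m - 1)..int m - 1}" using assms by simp
  have kb: "- int m \<le> k" "k \<le> int m" "k \<noteq> 0" using k unfolding chips_def by auto
  show "invk m (\<lambda>_. 0) k" unfolding invk_def S
  proof (intro conjI impI)
    assume "0 < k"
    then have "{y \<in> {-(int m - 1)..int m - 1}. k \<le> y} = {k..int m - 1}" by auto
    then show "int (card {y \<in> {-(int m - 1)..int m - 1}. k \<le> y}) \<le> int m - k" using kb by simp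
  next
    assume "k < 0"
    then have "{y \<in> {-(int m - 1)..int m - 1}. y \<le> k} = {-(int m - 1)..k}" by auto
    then show "int (card {y \<in> {-(int m - 1)..int m - 1}. y \<le> k}) \<le> int m + k" using kb by simp
  qed
qed

lemma Inv_step:
  assumes "fire (chips m) c c'" "Inv m c"
  shows "Inv m c'"
proof -
  from assms(1) obtain a b where ab: "a \<in> chips m" "b \<in> chips m" "a < b" "c a = c b"
    and c': "c' = c(a := c a - 1, b := c b + 1)"
    by (cases rule: fire.cases) auto
  define z where "z = c a"
  have fin: "finite (chips m)" by (rule finite_chips)
  have abne: "a \<noteq> b" using ab(3) by simp
  have za: "c a = z" and zb: "c b = z" using ab(4) z_def by auto
  have c'z: "c' = c(a := z - 1, b := z + 1)" using c' za zb by simp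
  define N0 where "N0 = cfg (chips m - {a} - {b}) c"
  define H where "H = G (add_mset z N0)"
  note pr = cfg_pair[OF fin ab(1,2) abne za zb]
  have Ha: "G (cfg (chips m - {a}) c) = H" using pr(1) unfolding H_def N0_def by simp
  have Hb: "G (cfg (chips m - {b}) c) = H" using pr(2) unfolding H_def N0_def by simp
  have Xa: "G (cfg (chips m - {a}) c') = G (add_mset (z+1) N0)" using pr(3) c'z unfolding N0_def by simp
  have Xb: "G (cfg (chips m - {b}) c') = G (add_mset (z-1) N0)" using pr(4) c'z unfolding N0_def by simp
  obtain qa where qa: "qa - 1 \<in># H" "qa \<notin># H" "G (add_mset (z+1) N0) = add_mset qa (H - {#qa-1#})"
    using key_right[of z N0] unfolding H_def by blast
  obtain qb where qb: "qb + 1 \<in># H" "qb \<notin># H" "G (add_mset (z-1) N0) = add_mset qb (H - {#qb+1#})"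
    using key_left[of z N0] unfolding H_def by blast
  have stH: "stab H" unfolding H_def by (rule G_stab)
  define S where "S = set_mset H"
  have finS: "finite S" unfolding S_def by simp
  have SA: "set_mset (G (cfg (chips m - {a}) c')) = insert qa (S - {qa - 1})"
    using set_move[OF stH qa(1,2)] Xa qa(3) unfolding S_def by simp
  have SB: "set_mset (G (cfg (chips m - {b}) c')) = insert qb (S - {qb + 1})"
    using set_move[OF stH qb(1,2)] Xb qb(3) unfolding S_def by simp
  have qaS: "qa - 1 \<in> S" "qa \<notin> S" using qa unfolding S_def by auto
  have qbS: "qb + 1 \<in> S" "qb \<notin> S" using qb unfolding S_def by auto
  have Ia: "invk m c a" and Ib: "invk m c b" using assms(2) ab unfolding Inv_def by auto
  have Ia': "(0 < a \<longrightarrow> int (card {y \<in> S. a \<le> y}) \<le> int m - a) \<and> (a < 0 \<longrightarrow> int (card {y \<in> S. y \<le> a}) \<le> int m + a)"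
    using Ia Ha unfolding invk_def S_def by simp
  have Ib': "(0 < b \<longrightarrow> int (card {y \<in> S. b \<le> y}) \<le> int m - b) \<and> (b < 0 \<longrightarrow> int (card {y \<in> S. y \<le> b}) \<le> int m + b)"
    using Ib Hb unfolding invk_def S_def by simp
  show ?thesis unfolding Inv_def
  proof
    fix k assume k: "k \<in> chips m"
    consider (ka) "k = a" | (kb) "k = b" | (ko) "k \<noteq> a" "k \<noteq> b" by blast
    then show "invk m c' k"
    proof cases
      case ka
      show ?thesis unfolding invk_def ka SA
      proof (intro conjI impI)
        assume a0: "0 < a"
        have e: "card {y \<in> insert qa (S - {qa - 1}). a \<le> y} = card {y \<in> S. a \<le> y} + (if qa = a then 1 else 0)"
          using card_ins_ge[OF finS qaS] .
        have i: "int (card {y \<in> S. a \<le> y}) \<le> int (card {y \<in> S. b \<le> y}) + (b - a) - (if a \<in> S then 0 else 1)"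
          using card_interval_ge[OF finS ab(3)] .
        have ib: "int (card {y \<in> S. b \<le> y}) \<le> int m - b" using Ib' a0 ab(3) by simp
        show "int (card {y \<in> insert qa (S - {qa - 1}). a \<le> y}) \<le> int m - a"
          using e i ib qaS by (cases "qa = a") (auto split: if_splits)
      next
        assume a0: "a < 0"
        have "card {y \<in> insert qa (S - {qa - 1}). y \<le> a} \<le> card {y \<in> S. y \<le> a}"
          using card_ins_le2[OF finS qaS] .
        then show "int (card {y \<in> insert qa (S - {qa - 1}). y \<le> a}) \<le> int m + a" using Ia' a0 by simp
      qed
    next
      case kb
      show ?thesis unfolding invk_def kb SB
      proof (intro conjI impI)
        assume b0: "0 < b"
        have "card {y \<in> insert qb (S - {qb + 1}). b \<le> y} \<le> card {y \<in> S. b \<le> y}"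
          using card_ins_ge2[OF finS qbS] .
        then show "int (card {y \<in> insert qb (S - {qb + 1}). b \<le> y}) \<le> int m - b" using Ib' b0 by simp
      next
        assume b0: "b < 0"
        have e: "card {y \<in> insert qb (S - {qb + 1}). y \<le> b} = card {y \<in> S. y \<le> b} + (if qb = b then 1 else 0)"
          using card_ins_le[OF finS qbS] .
        have i: "int (card {y \<in> S. y \<le> b}) \<le> int (card {y \<in> S. y \<le> a}) + (b - a) - (if b \<in> S then 0 else 1)"
          using card_interval_le[OF finS ab(3)] .
        have ia: "int (card {y \<in> S. y \<le> a}) \<le> int m + a" using Ia' b0 ab(3) by simp
        show "int (card {y \<in> insert qb (S - {qb + 1}). y \<le> b}) \<le> int m + b"
          using e i ia qbS by (cases "qb = b") (auto split: if_splits)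
      qed
    next
      case ko
      have f: "cfg (chips m - {k}) c' = fire_at (cfg (chips m - {k}) c) z \<and> 2 \<le> count (cfg (chips m - {k}) c) z"
        unfolding c'z by (rule cfg_fire) (use fin ab(1,2) ko abne za zb in auto)
      then have "ufire (cfg (chips m - {k}) c) (cfg (chips m - {k}) c')" unfolding ufire_def by blast
      then have "G (cfg (chips m - {k}) c') = G (cfg (chips m - {k}) c)" by (intro G_step) simp
      moreover have "invk m c k" using assms(2) k unfolding Inv_def by blast
      ultimately show ?thesis unfolding invk_def by simp
    qed
  qed
qed

lemma fire_ufire:
  assumes "fire (chips m) c c'"
  shows "ufire (cfg (chips m) c) (cfg (chips m) c')"
proof -
  from assms obtain a b where ab: "a \<in> chips m" "b \<in> chips m" "a < b" "c a = c b"
    and c': "c' = c(a := c a - 1, b := c b + 1)"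
    by (cases rule: fire.cases) auto
  define z where "z = c a"
  have za: "c a = z" and zb: "c b = z" using ab(4) z_def by auto
  have abne: "a \<noteq> b" using ab(3) by simp
  have c'z: "c' = c(a := z - 1, b := z + 1)" using c' za zb by simp
  have "cfg (chips m) c' = fire_at (cfg (chips m) c) z \<and> 2 \<le> count (cfg (chips m) c) z"
    unfolding c'z by (rule cfg_fire[OF finite_chips ab(1,2) abne za zb])
  then show ?thesis unfolding ufire_def by blast
qed

lemma fire_rt:
  "(fire (chips m))\<^sup>*\<^sup>* c c' \<Longrightarrow> ufire\<^sup>*\<^sup>* (cfg (chips m) c) (cfg (chips m) c')"
  by (induction rule: rtranclp_induct) (auto intro: fire_ufire rtranclp.rtrancl_into_rtrancl)

lemma Inv_rt:
  "(fire (chips m))\<^sup>*\<^sup>* c0 c \<Longrightarrow> Inv m c0 \<Longrightarrow> Inv m c"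
  by (induction rule: rtranclp_induct) (auto intro: Inv_step)

theorem theorem2p10:
  fixes m :: nat and c :: "int \<Rightarrow> int"
  assumes "m \<ge> 1"
    and "(fire (chips m))\<^sup>*\<^sup>* (\<lambda>_. 0) c"
    and "terminal (chips m) c"
  shows "\<forall>k \<in> chips m. c k = k"
proof -
  let ?L = "chips m"
  define S where "S = {-int m..int m} - {0}"
  have finL: "finite ?L" by (rule finite_chips)
  have finS: "finite S" unfolding S_def by simp
  have inv: "Inv m c" using Inv_rt[OF assms(2) Inv_init[OF assms(1)]] .
  have inj: "inj_on c ?L" using assms(3) unfolding terminal_def .
  have cfgc: "cfg ?L c = mset_set (c ` ?L)" unfolding cfg_def using image_mset_mset_set[OF inj] .
  have "cfg ?L (\<lambda>_. 0) = replicate_mset (2 * m) 0" unfolding cfg_def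
    by (simp add: image_mset_const_eq card_chips)
  then have G0: "G (cfg ?L (\<lambda>_. 0)) = mset_set S" using G_rep unfolding S_def by simp
  have "G (cfg ?L (\<lambda>_. 0)) = cfg ?L c"
    using G_eq[OF fire_rt[OF assms(2)]] cfgc stab_mset_set by simp
  then have "mset_set (c ` ?L) = mset_set S" using G0 cfgc by simp
  then have "set_mset (mset_set (c ` ?L)) = set_mset (mset_set S)" by simp
  then have imgS: "c ` ?L = S" using finL finS by simp
  have cS: "\<And>k. k \<in> ?L \<Longrightarrow> c k \<in> S" using imgS by blast
  have Gk: "set_mset (G (cfg (?L - {k}) c)) = S - {c k}" if k: "k \<in> ?L" for k
  proof -
    have inj': "inj_on c (?L - {k})" using inj by (rule inj_on_subset) auto
    have "cfg (?L - {k}) c = mset_set (c ` (?L - {k}))" unfolding cfg_def using image_mset_mset_set[OF inj'] .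
    then have "G (cfg (?L - {k}) c) = mset_set (c ` (?L - {k}))" using G_of_stab stab_mset_set by simp
    moreover have "c ` (?L - {k}) = S - {c k}"
    proof
      show "c ` (?L - {k}) \<subseteq> S - {c k}" using inj k imgS unfolding inj_on_def by blast
      show "S - {c k} \<subseteq> c ` (?L - {k})" using imgS by blast
    qed
    ultimately show ?thesis using finS by simp
  qed
  have pos: "k \<le> c k" if k: "k \<in> ?L" "0 < k" for k
  proof (rule ccontr)
    assume nk: "\<not> k \<le> c k"
    have "invk m c k" using inv k(1) unfolding Inv_def by blast
    then have a: "int (card {y \<in> S - {c k}. k \<le> y}) \<le> int m - k" unfolding invk_def using Gk[OF k(1)] k(2) by simp
    have km: "k \<le> int m" using k(1) unfolding chips_def by auto
    have "{y \<in> S - {c k}. k \<le> y} = {k..int m}" using k nk unfolding S_def by auto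
    then show False using a km by simp
  qed
  have neg: "c k \<le> k" if k: "k \<in> ?L" "k < 0" for k
  proof (rule ccontr)
    assume nk: "\<not> c k \<le> k"
    have "invk m c k" using inv k(1) unfolding Inv_def by blast
    then have a: "int (card {y \<in> S - {c k}. y \<le> k}) \<le> int m + k" unfolding invk_def using Gk[OF k(1)] k(2) by simp
    have km: "- int m \<le> k" using k(1) unfolding chips_def by auto
    have "{y \<in> S - {c k}. y \<le> k} = {- int m..k}" using k nk unfolding S_def by auto
    then show False using a km by simp
  qed
  have P: "\<forall>k. k = int m - int n \<and> 0 < k \<longrightarrow> c k = k" for n
  proof (induction n rule: less_induct)
    case (less n)
    show ?case
    proof (intro allI impI)
      fix k assume k: "k = int m - int n \<and> 0 < k"
      have kL: "k \<in> ?L" using k unfolding chips_def by auto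
      have ge: "k \<le> c k" using pos[OF kL] k by simp
      have le: "c k \<le> int m" using cS[OF kL] unfolding S_def by auto
      show "c k = k"
      proof (rule ccontr)
        assume ne: "c k \<noteq> k"
        define j where "j = c k"
        have jk: "k < j" using ge ne j_def by simp
        have jm: "j \<le> int m" using le j_def by simp
        have jL: "j \<in> ?L" using jk jm k unfolding chips_def by auto
        have lt: "nat (int m - j) < n" using jk k jm by simp
        have "c j = j" using less.IH[OF lt] jk k jm by auto
        then have "c j = c k" using j_def by simp
        then have "j = k" using inj jL kL unfolding inj_on_def by blast
        then show False using jk by simp
      qed
    qed
  qed
  have Q: "\<forall>k. k = - (int m - int n) \<and> k < 0 \<longrightarrow> c k = k" for n
  proof (induction n rule: less_induct)
    case (less n)
    show ?case
    proof (intro allI impI)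
      fix k assume k: "k = - (int m - int n) \<and> k < 0"
      have kL: "k \<in> ?L" using k unfolding chips_def by auto
      have ge: "c k \<le> k" using neg[OF kL] k by simp
      have le: "- int m \<le> c k" using cS[OF kL] unfolding S_def by auto
      show "c k = k"
      proof (rule ccontr)
        assume ne: "c k \<noteq> k"
        define j where "j = c k"
        have jk: "j < k" using ge ne j_def by simp
        have jm: "- int m \<le> j" using le j_def by simp
        have jL: "j \<in> ?L" using jk jm k unfolding chips_def by auto
        have lt: "nat (int m + j) < n" using jk k jm by simp
        have "c j = j" using less.IH[OF lt] jk k jm by auto
        then have "c j = c k" using j_def by simp
        then have "j = k" using inj jL kL unfolding inj_on_def by blast
        then show False using jk by simp
      qed
    qed
  qed
  show ?thesis
  proof
    fix k assume kL: "k \<in> ?L"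
    then have kb: "- int m \<le> k" "k \<le> int m" "k \<noteq> 0" unfolding chips_def by auto
    show "c k = k"
    proof (cases "0 < k")
      case True
      then show ?thesis using P[of "nat (int m - k)"] kb by auto
    next
      case False
      then have "k < 0" using kb by simp
      then show ?thesis using Q[of "nat (int m + k)"] kb by auto
    qed
  qed
qed

end
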